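(* Let $m>n\ge1$ be coprime integers. Define $$\mathcal{A}_{\frac{m}{n}}(q)=q\,\mathcal{N}_{\frac{m}{n}}(q)\mathcal{N}_{\frac{n}{m}}(q)+\mathcal{D}_{\frac{m}{n}}(q)\mathcal{D}_{\frac{n}{m}}(q),$$ $$\mathcal{B}_{\frac{m}{n}}(q)=\mathcal{N}_{\frac{m}{n}}(q)\mathcal{D}_{\frac{n}{m}}(q)-\mathcal{D}_{\frac{m}{n}}(q)\mathcal{N}_{\frac{n}{m}}(q),$$ $$\mathcal{C}_{\frac{m}{n}}(q)=q\,\mathcal{N}_{\frac{m}{n}}(q)^2+\mathcal{D}_{\frac{m}{n}}(q)^2.$$ Then $$\mathcal{A}_{\frac{m}{n}}(q)^2+q\,\mathcal{B}_{\frac{m}{n}}(q)^2=\mathcal{C}_{\frac{m}{n}}(q)\,\mathcal{C}^*_{\frac{m}{n}}(q),$$ where $\mathcal{C}^*_{\frac{m}{n}}(q):=q^{\deg(\mathcal{C}_{\frac{m}{n}})}\,\mathcal{C}_{\frac{m}{n}}(q^{-1})$.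
   Context: The $q$-deformed rationals: $x\mapsto[x]_q$ is the unique map from $\mathbb{Q}\cup\{\infty\}$ to $\mathbb{Q}(q)\cup\{\infty\}$ satisfying $[0]_q=0$, $[x+1]_q=q[x]_q+1$ and $[-1/x]_q=-1/(q[x]_q)$. For positive rational $x$, $\mathcal{N}_x,\mathcal{D}_x\in\mathbb{Z}[q]$ are the numerator and denominator of $[x]_q$: the polynomials with no common divisor in $\mathbb{Z}[q]$ other than $\pm1$ and with positive leading coefficients such that $[x]_q=\mathcal{N}_x/\mathcal{D}_x$. *)

theory Defs
  imports "HOL-Computational_Algebra.Polynomial" "HOL-Computational_Algebra.Fraction_Field"
begin

text \<open>Extended rationals Q \<union> {\<infinity>} as rat option (None = \<infinity>), and
  extended rational functions Q(q) \<union> {\<infinity>} as (int poly fract) option,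
  where int poly fract is the fraction field of Z[q], i.e. Q(q).\<close>

definition ext_T :: "rat option \<Rightarrow> rat option" where
  "ext_T x = (case x of None \<Rightarrow> None | Some r \<Rightarrow> Some (r + 1))"

definition ext_S :: "rat option \<Rightarrow> rat option" where
  "ext_S x = (case x of None \<Rightarrow> Some 0
      | Some r \<Rightarrow> (if r = 0 then None else Some (- 1 / r)))"

definition qvar :: "int poly fract" where
  "qvar = Fract [:0, 1:] 1"

definition qext_T :: "int poly fract option \<Rightarrow> int poly fract option" where
  "qext_T y = (case y of None \<Rightarrow> None | Some f \<Rightarrow> Some (qvar * f + 1))"

definition qext_S :: "int poly fract option \<Rightarrow> int poly fract option" where
  "qext_S y = (case y of None \<Rightarrow> Some 0
      | Some f \<Rightarrow> (if f = 0 then None else Some (- 1 / (qvar * f))))"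

definition qrat :: "rat option \<Rightarrow> int poly fract option" where
  "qrat = (THE f. f (Some 0) = Some 0 \<and> (\<forall>x. f (ext_T x) = qext_T (f x))
                  \<and> (\<forall>x. f (ext_S x) = qext_S (f x)))"

definition qND :: "rat \<Rightarrow> int poly \<times> int poly" where
  "qND x = (THE (N, D). D \<noteq> 0 \<and> qrat (Some x) = Some (Fract N D) \<and> coprime N D
              \<and> lead_coeff N > 0 \<and> lead_coeff D > 0)"

definition qN :: "rat \<Rightarrow> int poly" where "qN x = fst (qND x)"
definition qD :: "rat \<Rightarrow> int poly" where "qD x = snd (qND x)"

end

theory Submission
  imports Defs "HOL-Computational_Algebra.Polynomial_Factorial"
begin


lemma qvar_nz: "qvar \<noteq> 0"
  by (simp add: qvar_def Zero_fract_def eq_fract)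

definition qTi :: "int poly fract option \<Rightarrow> int poly fract option" where
  "qTi y = (case y of None \<Rightarrow> None | Some f \<Rightarrow> Some ((f - 1) / qvar))"

lemma T_Ti[simp]: "qext_T (qTi y) = y"
  using qvar_nz by (cases y) (auto simp: qext_T_def qTi_def)

lemma Ti_T[simp]: "qTi (qext_T y) = y"
  using qvar_nz by (cases y) (auto simp: qext_T_def qTi_def)

lemma S_S[simp]: "qext_S (qext_S y) = y"
  using qvar_nz by (cases y) (auto simp: qext_S_def field_simps)

lemma braid: "qTi (qext_S (qTi (qext_S y))) = qext_S (qext_T y)"
proof (cases y)
  case None thus ?thesis using qvar_nz by (simp add: qext_S_def qext_T_def qTi_def field_simps)
next
  case (Some f)
  show ?thesis
  proof (cases "f = 0")
    case True thus ?thesis using Some qvar_nz by (simp add: qext_S_def qext_T_def qTi_def field_simps)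
  next
    case False
    show ?thesis
    proof (cases "qvar * f + 1 = 0")
      case True
      have "(- 1 / (qvar * f) - 1) / qvar = 0"
        using True False qvar_nz by (simp add: field_simps)
      thus ?thesis using True Some False qvar_nz by (simp add: qext_S_def qext_T_def qTi_def)
    next
      case F2: False
      have "(- 1 / (qvar * f) - 1) / qvar \<noteq> 0"
        using F2 False qvar_nz by (simp add: field_simps add_eq_0_iff)
      moreover have "(- 1 / (qvar * ((- 1 / (qvar * f) - 1) / qvar)) - 1) / qvar = - 1 / (qvar * (qvar * f + 1))"
      proof -
        have h1: "qvar * f + 1 \<noteq> 0" using F2 .
        have h2: "(- 1 / (qvar * f) - 1) / qvar = - (qvar * f + 1) / (qvar * qvar * f)"
          using False qvar_nz by (simp add: field_simps)
        have h3a: "qvar * (- (qvar * f + 1) / (qvar * qvar * f)) = - (qvar * f + 1) / (qvar * f)"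
          using False qvar_nz by (simp add: field_simps)
        have h3: "- 1 / (qvar * (- (qvar * f + 1) / (qvar * qvar * f))) = qvar * f / (qvar * f + 1)"
          unfolding h3a using False qvar_nz h1 by (simp add: field_simps)
        have h4: "(qvar * f / (qvar * f + 1) - 1) / qvar = - 1 / (qvar * (qvar * f + 1))"
          using False qvar_nz h1 by (simp add: field_simps)
        show ?thesis using h2 h3 h4 by simp
      qed
      ultimately show ?thesis using Some False F2 qvar_nz by (simp add: qext_S_def qext_T_def qTi_def)
    qed
  qed
qed

definition actT :: "int \<Rightarrow> int poly fract option \<Rightarrow> int poly fract option" where
  "actT k y = (if 0 \<le> k then (qext_T ^^ nat k) y else (qTi ^^ nat (-k)) y)"

lemma actT_0[simp]: "actT 0 y = y" by (simp add: actT_def)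

lemma actT_succ: "actT (k+1) y = qext_T (actT k y)"
proof (cases "0 \<le> k")
  case True
  hence "nat (k+1) = Suc (nat k)" by simp
  thus ?thesis using True by (simp add: actT_def)
next
  case False
  show ?thesis
  proof (cases "k = -1")
    case True thus ?thesis by (simp add: actT_def)
  next
    case F2: False
    hence "nat (-k) = Suc (nat (-(k+1)))" using False by simp
    thus ?thesis using False F2 by (simp add: actT_def)
  qed
qed

lemma denom_le: assumes "b > 0" shows "snd (quotient_of (Rat.Fract a b)) \<le> b"
proof -
  obtain p q where pq: "quotient_of (Rat.Fract a b) = (p, q)" by (cases "quotient_of (Rat.Fract a b)")
  have q: "q > 0" using quotient_of_denom_pos[OF pq] .
  have c: "coprime p q" using quotient_of_coprime[OF pq] .
  have "Rat.Fract p q = Rat.Fract a b" using quotient_of_eq[OF pq] .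
  hence "p * b = a * q" using q assms by (simp add: eq_rat)
  hence "q dvd p * b" by (metis dvd_triv_right)
  hence "q dvd b" using c by (metis coprime_commute coprime_dvd_mult_right_iff)
  hence "q \<le> b" using assms by (simp add: zdvd_imp_le)
  thus ?thesis using pq by simp
qed

definition dn :: "rat \<Rightarrow> nat" where "dn r = nat (snd (quotient_of r))"

lemma dn_shift: "dn (r - of_int k) \<le> dn r"
proof -
  obtain p q where pq: "quotient_of r = (p, q)" by (cases "quotient_of r")
  have q: "q > 0" using quotient_of_denom_pos[OF pq] .
  have "r = Rat.Fract p q" using Fract_quotient_of[of r] pq by simp
  hence "r - of_int k = Rat.Fract (p - k * q) q" using q by (simp add: of_int_rat diff_rat)
  hence "snd (quotient_of (r - of_int k)) \<le> q" using denom_le[OF q] by simp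
  thus ?thesis using pq by (simp add: dn_def nat_mono)
qed

lemma dn_inv: assumes "0 < r" "r < 1" shows "dn (-1/r) < dn r"
proof -
  obtain p q where pq: "quotient_of r = (p, q)" by (cases "quotient_of r")
  have q: "q > 0" using quotient_of_denom_pos[OF pq] .
  have r: "r = Rat.Fract p q" using Fract_quotient_of[of r] pq by simp
  have p: "0 < p" "p < q" using assms q unfolding r by (auto simp: Rat.zero_less_Fract_iff Rat.Fract_less_one_iff)
  have "-1/r = - inverse r" by (simp add: divide_inverse)
  also have "... = Rat.Fract (-q) p" unfolding r by (simp add: inverse_rat minus_rat)
  finally have "-1/r = Rat.Fract (-q) p" .
  thus ?thesis using denom_le[of p "-q"] p pq by (simp add: dn_def)
qed

function g :: "rat \<Rightarrow> int poly fract option" where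
  "g r = (if r = 0 then Some 0 else if r < 0 \<or> 1 \<le> r then actT \<lfloor>r\<rfloor> (g (r - of_int \<lfloor>r\<rfloor>))
          else qext_S (g (-1/r)))"
  by auto
termination
proof (relation "measure (\<lambda>r. 2 * dn r + (if 0 \<le> r \<and> r < 1 then 0 else 1))", simp)
  fix r :: rat
  assume "r \<noteq> 0" "r < 0 \<or> 1 \<le> r"
  moreover have "0 \<le> r - of_int \<lfloor>r\<rfloor>" "r - of_int \<lfloor>r\<rfloor> < 1"
    by (simp_all add: floor_less_cancel)
  ultimately show "(r - of_int \<lfloor>r\<rfloor>, r) \<in> measure (\<lambda>r. 2 * dn r + (if 0 \<le> r \<and> r < 1 then 0 else 1))"
    using dn_shift[of r "\<lfloor>r\<rfloor>"] by auto
next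
  fix r :: rat
  assume "r \<noteq> 0" "\<not> (r < 0 \<or> 1 \<le> r)"
  hence "0 < r" "r < 1" by auto
  moreover have "-1/r < 0" using \<open>0 < r\<close> by simp
  ultimately show "(-1/r, r) \<in> measure (\<lambda>r. 2 * dn r + (if 0 \<le> r \<and> r < 1 then 0 else 1))"
    using dn_inv[of r] by auto
qed

declare g.simps[simp del]

lemma g_floor: "g r = actT \<lfloor>r\<rfloor> (g (r - of_int \<lfloor>r\<rfloor>))"
proof (cases "r = 0 \<or> r < 0 \<or> 1 \<le> r")
  case True thus ?thesis by (metis g.simps actT_0 floor_zero of_int_0 diff_zero)
next
  case False
  hence "\<lfloor>r\<rfloor> = 0" by (simp add: floor_eq_iff)
  thus ?thesis by simp
qed

lemma g_T: "g (r + 1) = qext_T (g r)"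
proof -
  have "g (r + 1) = actT (\<lfloor>r\<rfloor> + 1) (g (r + 1 - of_int (\<lfloor>r\<rfloor> + 1)))"
    using g_floor[of "r+1"] by simp
  also have "\<dots> = qext_T (actT \<lfloor>r\<rfloor> (g (r - of_int \<lfloor>r\<rfloor>)))"
    by (simp add: actT_succ)
  also have "\<dots> = qext_T (g r)" using g_floor[of r] by simp
  finally show ?thesis .
qed

lemma g_Ti: "g (r - 1) = qTi (g r)"
  using g_T[of "r - 1"] by (metis Ti_T diff_add_cancel)

lemma g_0: "g 0 = Some 0" by (simp add: g.simps)

lemma g_small: "0 < r \<Longrightarrow> r < 1 \<Longrightarrow> g r = qext_S (g (-1/r))"
  by (subst g.simps) auto

lemma g_S_pos_aux: "0 < r \<Longrightarrow> nat \<lfloor>r\<rfloor> = k \<Longrightarrow> g (-1/r) = qext_S (g r)"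
proof (induction k arbitrary: r rule: less_induct)
  case (less k r)
  show ?case
  proof (cases "r < 1")
    case True thus ?thesis using g_small[of r] less.prems by (metis S_S)
  next
    case False
    show ?thesis
    proof (cases "r = 1")
      case True
      have "g (-1/r) = qTi (g 0)" using g_Ti[of 0] True by simp
      moreover have "g r = qext_T (g 0)" using g_T[of 0] True by simp
      ultimately show ?thesis using braid[of "Some 0"] by (simp add: g_0 qext_S_def qTi_def)
    next
      case F2: False
      hence r1: "r > 1" using False by simp
      define s where "s = (r - 1) / r"
      have s: "0 < s" "s < 1" using r1 by (simp_all add: s_def field_simps)
      have e1: "-1/r = s - 1" using r1 by (simp add: s_def field_simps)
      have e2: "-1/s = -1/(r-1) - 1" using r1 by (simp add: s_def field_simps)
      have fl: "nat \<lfloor>r - 1\<rfloor> < k" using less.prems r1 by (simp add: floor_diff_one) linarith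
      have IH: "g (-1/(r-1)) = qext_S (g (r - 1))" using less.IH[OF fl, of "r-1"] r1 by simp
      have "g (-1/r) = qTi (g s)" using g_Ti[of s] e1 by simp
      also have "\<dots> = qTi (qext_S (g (-1/s)))" using g_small[OF s] by simp
      also have "\<dots> = qTi (qext_S (qTi (qext_S (g (r - 1)))))" using e2 g_Ti[of "-1/(r-1)"] IH by simp
      also have "\<dots> = qext_S (qext_T (g (r - 1)))" by (rule braid)
      also have "\<dots> = qext_S (g r)" using g_T[of "r-1"] by simp
      finally show ?thesis .
    qed
  qed
qed

lemma g_S: assumes "r \<noteq> 0" shows "g (-1/r) = qext_S (g r)"
proof (cases "r > 0")
  case True thus ?thesis using g_S_pos_aux by blast
next
  case False
  hence t: "-1/r > 0" using assms by (simp add: field_simps)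
  have "g (-1/(-1/r)) = qext_S (g (-1/r))" using g_S_pos_aux[OF t] by blast
  hence "g r = qext_S (g (-1/r))" by simp
  thus ?thesis by (metis S_S)
qed

definition F :: "rat option \<Rightarrow> int poly fract option" where
  "F x = (case x of None \<Rightarrow> None | Some r \<Rightarrow> g r)"

lemma F_spec: "F (Some 0) = Some 0 \<and> (\<forall>x. F (ext_T x) = qext_T (F x)) \<and> (\<forall>x. F (ext_S x) = qext_S (F x))"
proof (intro conjI allI)
  show "F (Some 0) = Some 0" by (simp add: F_def g_0)
next
  fix x show "F (ext_T x) = qext_T (F x)"
    by (cases x) (auto simp: F_def ext_T_def qext_T_def g_T)
next
  fix x show "F (ext_S x) = qext_S (F x)"
  proof (cases x)
    case None thus ?thesis by (simp add: F_def ext_S_def qext_S_def g_0)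
  next
    case (Some r) thus ?thesis
      using g_S[of r] by (cases "r = 0") (simp_all add: F_def ext_S_def qext_S_def g_0)
  qed
qed

lemma F_unique:
  assumes h0: "f (Some 0) = Some 0" and hT: "\<forall>x. f (ext_T x) = qext_T (f x)"
    and hS: "\<forall>x. f (ext_S x) = qext_S (f x)"
  shows "f = F"
proof
  have sh1: "f (Some (r + 1)) = qext_T (f (Some r))" for r
    using hT[rule_format, of "Some r"] by (simp add: ext_T_def)
  have sh: "f (Some (r + of_int k)) = actT k (f (Some r))" for r k
  proof (induction k rule: int_induct[where k=0])
    case base thus ?case by simp
  next
    case (step1 i) thus ?case using sh1[of "r + of_int i"] by (simp add: actT_succ add.assoc)
  next
    case (step2 i)
    have "f (Some (r + of_int i)) = qext_T (f (Some (r + of_int (i - 1))))"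
      using sh1[of "r + of_int (i - 1)"] by (simp add: add.assoc)
    hence "f (Some (r + of_int (i - 1))) = qTi (f (Some (r + of_int i)))" by (metis Ti_T)
    moreover have "actT (i - 1) (f (Some r)) = qTi (actT i (f (Some r)))"
      using actT_succ[of "i - 1"] by (metis Ti_T diff_add_cancel)
    ultimately show ?case using step2 by simp
  qed
  have "f (Some r) = g r" for r
  proof (induction r rule: g.induct)
    case (1 r)
    show ?case
    proof (cases "r = 0")
      case True thus ?thesis using h0 g_0 by simp
    next
      case False
      show ?thesis
      proof (cases "r < 0 \<or> 1 \<le> r")
        case True
        have "f (Some r) = actT \<lfloor>r\<rfloor> (f (Some (r - of_int \<lfloor>r\<rfloor>)))"
          using sh[of "r - of_int \<lfloor>r\<rfloor>" "\<lfloor>r\<rfloor>"] by simp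
        thus ?thesis using 1(1)[OF False True] g_floor[of r] by simp
      next
        case T2: False
        have "f (Some r) = qext_S (f (Some (-1/r)))"
          using hS[rule_format, of "Some (-1/r)"] False by (simp add: ext_S_def)
        thus ?thesis using 1(2)[OF False T2] g.simps[of r] False T2 by simp
      qed
    qed
  qed
  moreover have "f None = None"
    using hS[rule_format, of "Some 0"] h0 by (simp add: ext_S_def qext_S_def)
  ultimately show "f x = F x" for x by (cases x) (auto simp: F_def)
qed

lemma qrat_eq: "qrat = F"
  unfolding qrat_def
proof (rule the1_equality)
  show "\<exists>!f. f (Some 0) = Some 0 \<and> (\<forall>x. f (ext_T x) = qext_T (f x)) \<and> (\<forall>x. f (ext_S x) = qext_S (f x))"
    using F_spec F_unique by blast
qed (rule F_spec)

lemma qrat_Some: "qrat (Some r) = g r" by (simp add: qrat_eq F_def)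



lemma q_mult: "[:0, 1:] * p = pCons 0 (p :: int poly)"
  by simp

definition rfl :: "nat \<Rightarrow> int poly \<Rightarrow> int poly" where
  "rfl k P = monom 1 (k - degree P) * reflect_poly P"

lemma coeff_refl: assumes "degree P \<le> k"
  shows "coeff (rfl k P) n = (if n \<le> k then coeff P (k - n) else 0)"
proof -
  have "coeff (rfl k P) n = (if n < k - degree P then 0 else coeff (reflect_poly P) (n - (k - degree P)))"
    by (simp add: rfl_def coeff_monom_mult)
  also have "\<dots> = (if n \<le> k then coeff P (k - n) else 0)"
    using assms by (auto simp: coeff_reflect_poly coeff_eq_0)
  finally show ?thesis .
qed

lemma refl_deg: "degree (rfl k P) \<le> k" if "degree P \<le> k"
  using that by (intro degree_le) (auto simp: coeff_refl)

lemma refl_add: "degree A \<le> k \<Longrightarrow> degree B \<le> k \<Longrightarrow> rfl k (A + B) = rfl k A + rfl k B"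
  by (rule poly_eqI) (simp add: coeff_refl degree_add_le)

lemma refl_shift1: assumes "degree A \<le> k" shows "rfl (Suc k) (pCons 0 A) = rfl k A"
proof (rule poly_eqI)
  fix n
  have d: "degree (pCons 0 A) \<le> Suc k" using assms by (cases "A = 0") auto
  show "coeff (rfl (Suc k) (pCons 0 A)) n = coeff (rfl k A) n"
  proof (cases "n \<le> k")
    case True
    hence "Suc k - n = Suc (k - n)" by simp
    thus ?thesis using True coeff_refl[OF d, of n] coeff_refl[OF assms, of n] by simp
  next
    case False
    thus ?thesis using coeff_refl[OF d, of n] coeff_refl[OF assms, of n]
      by (cases "n = Suc k") auto
  qed
qed

lemma refl_shift2: assumes "degree B \<le> k" shows "rfl (Suc k) B = pCons 0 (rfl k B)"
proof (rule poly_eqI)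
  fix n
  have d: "degree B \<le> Suc k" using assms by simp
  show "coeff (rfl (Suc k) B) n = coeff (pCons 0 (rfl k B)) n"
  proof (cases n)
    case 0 thus ?thesis using coeff_refl[OF d, of 0] coeff_eq_0[of B "Suc k"] assms by simp
  next
    case (Suc m)
    thus ?thesis using coeff_refl[OF d, of n] coeff_refl[OF assms, of m] by simp
  qed
qed

lemma refl_refl: "degree P \<le> k \<Longrightarrow> rfl k (rfl k P) = P"
  by (rule poly_eqI) (auto simp: coeff_refl refl_deg coeff_eq_0)

lemma refl_degree_eq: "degree P \<le> k \<Longrightarrow> coeff P 0 \<noteq> 0 \<Longrightarrow> degree (rfl k P) = k"
  by (metis coeff_refl diff_self_eq_0 le_antisym le_degree order_refl refl_deg)

lemma refl_self: "rfl (degree P) P = reflect_poly P"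
  by (simp add: rfl_def)

lemma refl_mult: "degree P \<le> a \<Longrightarrow> degree Q \<le> b \<Longrightarrow> rfl (a + b) (P * Q) = rfl a P * rfl b Q"
proof (cases "P = 0 \<or> Q = 0")
  case True thus ?thesis by (auto simp: rfl_def)
next
  case False
  assume a: "degree P \<le> a" "degree Q \<le> b"
  have d: "degree (P * Q) = degree P + degree Q" using False by (simp add: degree_mult_eq)
  have "a + b - degree (P * Q) = (a - degree P) + (b - degree Q)" using a d by simp
  hence "monom 1 (a + b - degree (P * Q)) = monom (1::int) (a - degree P) * monom 1 (b - degree Q)"
    by (simp add: mult_monom)
  thus ?thesis by (simp add: rfl_def reflect_poly_mult mult_ac)
qed



lemma gL: assumes y: "y > 0" and gy: "g y = Some f" and f: "f \<noteq> 0" and f1: "qvar * f + 1 \<noteq> 0"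
  shows "g (y / (y + 1)) = Some (qvar * f / (qvar * f + 1))"
proof -
  have z: "-1/y - 1 \<noteq> 0" using y by (simp add: field_simps)
  have a: "g (-1/y) = Some (-1 / (qvar * f))" using g_S[of y] y gy f by (simp add: qext_S_def)
  have b: "g (-1/y - 1) = Some ((-1 / (qvar * f) - 1) / qvar)" using g_Ti[of "-1/y"] a by (simp add: qTi_def)
  have v: "(-1 / (qvar * f) - 1) / qvar = - (qvar * f + 1) / (qvar * qvar * f)"
    using f qvar_nz by (simp add: field_simps)
  have vnz: "- (qvar * f + 1) / (qvar * qvar * f) \<noteq> 0" using f f1 qvar_nz by simp
  have h3a: "qvar * (- (qvar * f + 1) / (qvar * qvar * f)) = - (qvar * f + 1) / (qvar * f)"
    using f qvar_nz by (simp add: field_simps)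
  have h3: "- 1 / (qvar * (- (qvar * f + 1) / (qvar * qvar * f))) = qvar * f / (qvar * f + 1)"
    unfolding h3a using f qvar_nz f1 by (simp add: field_simps)
  have c: "g (-1/(-1/y - 1)) = Some (qvar * f / (qvar * f + 1))"
    using g_S[OF z] b v vnz h3 by (simp add: qext_S_def)
  have "-1/(-1/y - 1) = y / (y + 1)" using y by (simp add: field_simps)
  thus ?thesis using c by simp
qed

definition emb :: "int poly \<Rightarrow> int poly fract" where "emb P = Fract P 1"

lemma emb_add: "emb (a + b) = emb a + emb b" by (simp add: emb_def)
lemma emb_mult: "emb (a * b) = emb a * emb b" by (simp add: emb_def)
lemma emb_pCons0: "emb (pCons 0 a) = qvar * emb a" by (simp add: emb_def qvar_def)
lemma emb_nz: "emb a = 0 \<longleftrightarrow> a = 0" by (simp add: emb_def Zero_fract_def eq_fract)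
lemma Fract_emb: "b \<noteq> 0 \<Longrightarrow> Fract a b = emb a / emb b" by (simp add: emb_def)
lemma emb_1: "emb 1 = 1" by (simp add: emb_def One_fract_def)

lemma unit_core:
  fixes c N D :: "int poly"
  assumes "c dvd pCons 0 N" "c dvd D" "coprime N D" "coeff D 0 = 1"
  shows "is_unit c"
proof -
  obtain E where E: "D = pCons 1 E" using assms(4) by (cases D) auto
  have cN: "coprime c N"
  proof (rule coprimeI)
    fix d assume d: "d dvd c" "d dvd N"
    hence "d dvd D" using assms(2) dvd_trans by blast
    thus "is_unit d" using assms(3) d(2) by (metis coprime_common_divisor)
  qed
  have e: "c dvd [:0,1:] * N \<longleftrightarrow> c dvd [:0,1:]" using cN by (rule coprime_dvd_mult_left_iff)
  have "[:0,1:] * N = pCons 0 N" by simp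
  hence cq: "c dvd [:0,1:]" using e assms(1) by simp
  hence "c dvd [:0,1:] * E" by (rule dvd_mult2)
  moreover have "D = [:0,1:] * E + 1" using E by (simp add: one_pCons)
  ultimately show "is_unit c" using assms(2) dvd_add_right_iff[of c "[:0,1:] * E" 1] by simp
qed

lemma cop1: fixes N D :: "int poly" assumes "coprime N D" "coeff D 0 = 1" shows "coprime (pCons 0 N + D) D"
proof (rule coprimeI)
  fix c assume c: "c dvd pCons 0 N + D" "c dvd D"
  hence "c dvd pCons 0 N" using dvd_add_left_iff[of c D "pCons 0 N"] by simp
  thus "is_unit c" using unit_core c(2) assms by blast
qed

lemma cop2: fixes N D :: "int poly" assumes "coprime N D" "coeff D 0 = 1" shows "coprime (pCons 0 N) (pCons 0 N + D)"
proof (rule coprimeI)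
  fix c assume c: "c dvd pCons 0 N" "c dvd pCons 0 N + D"
  hence "c dvd D" using dvd_add_right_iff[of c "pCons 0 N" D] by simp
  thus "is_unit c" using unit_core c(1) assms by blast
qed

inductive tup :: "rat \<Rightarrow> int poly \<Rightarrow> int poly \<Rightarrow> int poly \<Rightarrow> int poly \<Rightarrow> bool" where
  base: "tup 1 1 1 1 1"
| stepT: "tup x N D N' D' \<Longrightarrow> tup (x + 1) (pCons 0 N + D) D (pCons 0 N') (pCons 0 N' + D')"
| swap: "tup x N D N' D' \<Longrightarrow> tup (1 / x) N' D' N D"

definition nonneg :: "int poly \<Rightarrow> bool" where "nonneg P = (\<forall>i. coeff P i \<ge> 0)"

definition tinv :: "rat \<Rightarrow> int poly \<Rightarrow> int poly \<Rightarrow> int poly \<Rightarrow> int poly \<Rightarrow> bool" where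
  "tinv x N D N' D' = (x > 0 \<and> g x = Some (Fract N D) \<and> g (1/x) = Some (Fract N' D') \<and>
     coprime N D \<and> coprime N' D' \<and> N \<noteq> 0 \<and> D \<noteq> 0 \<and> N' \<noteq> 0 \<and> D' \<noteq> 0 \<and>
     nonneg N \<and> nonneg D \<and> nonneg N' \<and> nonneg D' \<and> coeff D 0 = 1 \<and> coeff D' 0 = 1 \<and>
     degree D \<le> degree N \<and> D' = rfl (degree N) N \<and> N' = rfl (degree N) D)"

lemma nonneg_step: "nonneg N \<Longrightarrow> nonneg D \<Longrightarrow> nonneg (pCons 0 N + D)"
  by (auto simp: nonneg_def coeff_pCons split: nat.split intro: add_nonneg_nonneg)

lemma nonneg_pCons: "nonneg N \<Longrightarrow> nonneg (pCons 0 N)"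
  by (auto simp: nonneg_def coeff_pCons split: nat.split)

lemma tup_inv: "tup x N D N' D' \<Longrightarrow> tinv x N D N' D'"
proof (induction rule: tup.induct)
  case base
  have "g 1 = Some (Fract 1 1)" using g_T[of 0] by (simp add: g_0 qext_T_def One_fract_def)
  moreover have "rfl 0 1 = 1" by (simp add: rfl_def)
  ultimately show ?case by (simp add: tinv_def nonneg_def)
next
  case (stepT x N D N' D')
  have x: "x > 0" and gx: "g x = Some (Fract N D)" and gx': "g (1/x) = Some (Fract N' D')"
    and cp: "coprime N D" "coprime N' D'" and nz: "N \<noteq> 0" "D \<noteq> 0" "N' \<noteq> 0" "D' \<noteq> 0"
    and nn: "nonneg N" "nonneg D" "nonneg N'" "nonneg D'" and cD: "coeff D 0 = 1" "coeff D' 0 = 1"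
    and dg: "degree D \<le> degree N" and rD': "D' = rfl (degree N) N" and rN': "N' = rfl (degree N) D"
    using stepT.IH unfolding tinv_def by blast+
  have c0: "coeff (pCons 0 N + D) 0 = 1" "coeff (pCons 0 N' + D') 0 = 1" using cD by simp_all
  have nz1: "pCons 0 N + D \<noteq> 0" "pCons 0 N' + D' \<noteq> 0" using c0 by (metis coeff_0 zero_neq_one)+
  have g1: "g (x + 1) = Some (Fract (pCons 0 N + D) D)"
  proof -
    have "g (x + 1) = Some (qvar * Fract N D + 1)" using g_T[of x] gx by (simp add: qext_T_def)
    also have "qvar * Fract N D + 1 = Fract (pCons 0 N + D) D"
      using nz by (simp add: Fract_emb emb_add emb_pCons0 emb_nz field_simps)
    finally show ?thesis .
  qed
  have g2: "g (1 / (x + 1)) = Some (Fract (pCons 0 N') (pCons 0 N' + D'))"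
  proof -
    let ?f = "Fract N' D'"
    have f: "?f \<noteq> 0" using nz by (simp add: Fract_emb emb_nz)
    have f1: "qvar * ?f + 1 = emb (pCons 0 N' + D') / emb D'"
      using nz by (simp add: Fract_emb emb_add emb_pCons0 emb_nz field_simps)
    hence f1': "qvar * ?f + 1 \<noteq> 0" using nz1 nz by (simp add: emb_nz)
    have "g ((1/x) / (1/x + 1)) = Some (qvar * ?f / (qvar * ?f + 1))"
      using gL[of "1/x" ?f] x gx' f f1' by simp
    moreover have "(1/x) / (1/x + 1) = 1 / (x + 1)" using x by (simp add: field_simps)
    moreover have "qvar * ?f / (qvar * ?f + 1) = Fract (pCons 0 N') (pCons 0 N' + D')"
    proof -
      have "qvar * ?f / (qvar * ?f + 1) = (qvar * emb N' / emb D') / (emb (pCons 0 N' + D') / emb D')"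
        using f1 nz by (simp add: Fract_emb)
      also have "\<dots> = qvar * emb N' / emb (pCons 0 N' + D')"
        using nz nz1 by (simp add: emb_nz)
      also have "\<dots> = Fract (pCons 0 N') (pCons 0 N' + D')"
        using nz1 by (simp add: Fract_emb emb_pCons0)
      finally show ?thesis .
    qed
    ultimately show ?thesis by simp
  qed
  have dN: "degree (pCons 0 N) = Suc (degree N)" using nz by simp
  have dsum: "degree (pCons 0 N + D) = Suc (degree N)"
    using dg dN by (subst degree_add_eq_left) auto
  have r1: "rfl (Suc (degree N)) (pCons 0 N + D) = pCons 0 N' + D'"
  proof -
    have "rfl (Suc (degree N)) (pCons 0 N + D) = rfl (Suc (degree N)) (pCons 0 N) + rfl (Suc (degree N)) D"
      using dg dN by (intro refl_add) auto
    also have "\<dots> = rfl (degree N) N + pCons 0 (rfl (degree N) D)"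
      using dg by (simp add: refl_shift1 refl_shift2)
    finally show ?thesis using rD' rN' by simp
  qed
  have r2: "rfl (Suc (degree N)) D = pCons 0 N'" using dg rN' by (simp add: refl_shift2)
  have "x + 1 > 0" using x by simp
  moreover have "coprime (pCons 0 N + D) D" using cop1[OF cp(1) cD(1)] .
  moreover have "coprime (pCons 0 N') (pCons 0 N' + D')" using cop2[OF cp(2) cD(2)] .
  moreover have "pCons 0 N' \<noteq> 0" using nz by simp
  moreover have "nonneg (pCons 0 N + D)" "nonneg (pCons 0 N')" "nonneg (pCons 0 N' + D')"
    using nn by (simp_all add: nonneg_step nonneg_pCons)
  moreover have "degree D \<le> degree (pCons 0 N + D)" using dsum dg by simp
  ultimately show ?case unfolding tinv_def dsum
    using g1 g2 c0 nz nz1 r1[symmetric] r2[symmetric] nn cD by (intro conjI) assumption+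
next
  case (swap x N D N' D')
  have x: "x > 0" and gx: "g x = Some (Fract N D)" and gx': "g (1/x) = Some (Fract N' D')"
    and cp: "coprime N D" "coprime N' D'" and nz: "N \<noteq> 0" "D \<noteq> 0" "N' \<noteq> 0" "D' \<noteq> 0"
    and nn: "nonneg N" "nonneg D" "nonneg N'" "nonneg D'" and cD: "coeff D 0 = 1" "coeff D' 0 = 1"
    and dg: "degree D \<le> degree N" and rD': "D' = rfl (degree N) N" and rN': "N' = rfl (degree N) D"
    using swap.IH unfolding tinv_def by blast+
  have dN': "degree N' = degree N" using refl_degree_eq[of D "degree N"] dg cD rN' by simp
  have a1: "degree D' \<le> degree N'" using dN' refl_deg rD' by simp
  have a2: "D = rfl (degree N') N'" using dN' refl_refl dg rN' by simp
  have a3: "N = rfl (degree N') D'" using dN' refl_refl rD' by simp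
  have a4: "1 / x > 0" "g (1 / (1 / x)) = Some (Fract N D)" using x gx by simp_all
  show ?case unfolding tinv_def
    using a1 a2 a3 a4 gx' cp nz nn cD by (intro conjI) (assumption | rule coprime_commute[THEN iffD1])+
qed



lemma tup_ex_aux: "0 < a \<Longrightarrow> 0 < b \<Longrightarrow> nat (a + b) = k \<Longrightarrow>
    \<exists>N D N' D'. tup (of_int a / of_int b) N D N' D'"
proof (induction k arbitrary: a b rule: less_induct)
  case (less k a b)
  consider "a = b" | "a > b" | "a < b" by linarith
  thus ?case
  proof cases
    case 1 thus ?thesis using less.prems tup.base by auto
  next
    case 2
    obtain N D N' D' where t: "tup (of_int (a - b) / of_int b) N D N' D'"
      using less.IH[of "nat (a - b + b)" "a - b" b] less.prems 2 by auto
    have "of_int (a - b) / of_int b + 1 = (of_int a / of_int b :: rat)" using less.prems by (simp add: field_simps)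
    thus ?thesis using tup.stepT[OF t] by metis
  next
    case 3
    obtain N D N' D' where t: "tup (of_int (b - a) / of_int a) N D N' D'"
      using less.IH[of "nat (b - a + a)" "b - a" a] less.prems 3 by auto
    have "1 / (of_int (b - a) / of_int a + 1) = (of_int a / of_int b :: rat)" using less.prems by (simp add: field_simps)
    thus ?thesis using tup.swap[OF tup.stepT[OF t]] by metis
  qed
qed

lemma tup_ex: "0 < a \<Longrightarrow> 0 < b \<Longrightarrow> \<exists>N D N' D'. tup (of_int a / of_int b) N D N' D'"
  using tup_ex_aux by blast

lemma normalize_pos: fixes p :: "int poly" assumes "lead_coeff p > 0" shows "normalize p = p"
proof -
  have "unit_factor (lead_coeff p) = 1" using assms by simp
  thus ?thesis by (simp add: normalize_poly_eq_map_poly)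
qed

lemma fract_unique:
  fixes N D N' D' :: "int poly"
  assumes e: "Fract N D = Fract N' D'" and nz: "D \<noteq> 0" "D' \<noteq> 0"
    and cp: "coprime N D" "coprime N' D'" and l: "lead_coeff D > 0" "lead_coeff D' > 0"
  shows "N = N' \<and> D = D'"
proof -
  have e2: "N * D' = N' * D" using e nz by (simp add: eq_fract)
  have "D dvd N * D'" using e2 by simp
  hence d1: "D dvd D'" using cp(1) by (metis coprime_commute coprime_dvd_mult_right_iff)
  have "D' dvd N' * D" using e2 by (metis dvd_triv_right)
  hence d2: "D' dvd D" using cp(2) by (metis coprime_commute coprime_dvd_mult_right_iff)
  have DD: "D = D'" using associated_eqI[OF d1 d2 normalize_pos[OF l(1)] normalize_pos[OF l(2)]] .
  hence "N = N'" using e2 nz by simp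
  thus ?thesis using DD by simp
qed

lemma qND_eq:
  assumes "g r = Some (Fract N D)" "D \<noteq> 0" "coprime N D" "lead_coeff N > 0" "lead_coeff D > 0"
  shows "qN r = N \<and> qD r = D"
proof -
  have "qND r = (N, D)"
    unfolding qND_def qrat_Some
  proof (rule the_equality)
    show "case (N, D) of (N, D) \<Rightarrow> D \<noteq> 0 \<and> g r = Some (Fract N D) \<and> coprime N D \<and> 0 < lead_coeff N \<and> 0 < lead_coeff D"
      using assms by simp
  next
    fix p assume "case p of (N', D') \<Rightarrow> D' \<noteq> 0 \<and> g r = Some (Fract N' D') \<and> coprime N' D' \<and> 0 < lead_coeff N' \<and> 0 < lead_coeff D'"
    then obtain N' D' where p: "p = (N', D')" "D' \<noteq> 0" "g r = Some (Fract N' D')" "coprime N' D'" "0 < lead_coeff D'"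
      by (cases p) auto
    have "N' = N \<and> D' = D" using fract_unique[of N' D' N D] p assms by simp
    thus "p = (N, D)" using p by simp
  qed
  thus ?thesis by (simp add: qN_def qD_def)
qed

lemma lead_pos: "nonneg P \<Longrightarrow> P \<noteq> 0 \<Longrightarrow> lead_coeff P > 0"
  by (metis leading_coeff_0_iff nonneg_def order_le_less)

lemma ident: fixes q N D N' D' :: "'a :: comm_ring_1"
  shows "(q * N * N' + D * D')^2 + q * (N * D' - D * N')^2 = (q * N^2 + D^2) * (q * N'^2 + D'^2)"
  by (simp add: power2_eq_square algebra_simps)

lemma reflC:
  fixes N D N' D' :: "int poly"
  assumes nz: "N \<noteq> 0" and dg: "degree D \<le> degree N" and rD': "D' = rfl (degree N) N" and rN': "N' = rfl (degree N) D"
  shows "[:0,1:] * N'^2 + D'^2 = reflect_poly ([:0,1:] * N^2 + D^2)"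
proof -
  let ?c = "degree N"
  have dNN: "degree (N * N) = ?c + ?c" using nz by (simp add: degree_mult_eq)
  have dDD: "degree (D * D) \<le> ?c + ?c" using dg by (metis add_mono degree_mult_le order_trans)
  have e1: "D'^2 = rfl (Suc (?c + ?c)) (pCons 0 (N * N))"
    using refl_mult[of N ?c N ?c] refl_shift1[of "N * N" "?c + ?c"] dNN rD' by (simp add: power2_eq_square)
  have e2: "[:0,1:] * N'^2 = rfl (Suc (?c + ?c)) (D * D)"
    using refl_mult[of D ?c D ?c] refl_shift2[OF dDD] dg rN' by (simp add: power2_eq_square)
  have dC: "degree (pCons 0 (N * N) + D * D) = Suc (?c + ?c)"
    using dNN dDD nz by (subst degree_add_eq_left) auto
  have "[:0,1:] * N'^2 + D'^2 = rfl (Suc (?c + ?c)) (pCons 0 (N * N) + D * D)"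
    using e1 e2 refl_add[of "pCons 0 (N * N)" "Suc (?c + ?c)" "D * D"] dNN dDD nz by simp
  also have "\<dots> = reflect_poly (pCons 0 (N * N) + D * D)" using dC refl_self by metis
  finally show ?thesis by (simp add: power2_eq_square)
qed



theorem theorem2:
  fixes m n :: int
  assumes "1 \<le> n" and "n < m" and "coprime m n"
  defines "q \<equiv> [:0, 1:] :: int poly"
      and "x \<equiv> of_int m / of_int n :: rat"
      and "y \<equiv> of_int n / of_int m :: rat"
  defines "A \<equiv> q * qN x * qN y + qD x * qD y"
      and "B \<equiv> qN x * qD y - qD x * qN y"
      and "C \<equiv> q * (qN x)^2 + (qD x)^2"
  shows "A^2 + q * B^2 = C * reflect_poly C"
proof -
  obtain N0 D0 N0' D0' where t0: "tup (of_int (m - n) / of_int n) N0 D0 N0' D0'"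
    using tup_ex[of "m - n" n] assms(1,2) by auto
  have ex: "of_int (m - n) / of_int n + 1 = x" using assms(1) by (simp add: x_def field_simps)
  define N where "N = pCons 0 N0 + D0"
  define D where "D = D0"
  define N' where "N' = pCons 0 N0'"
  define D' where "D' = pCons 0 N0' + D0'"
  have t: "tup x N D N' D'" using tup.stepT[OF t0] ex unfolding N_def D_def N'_def D'_def by simp
  have x: "x > 0" and gx: "g x = Some (Fract N D)" and gx': "g (1/x) = Some (Fract N' D')"
    and cp: "coprime N D" "coprime N' D'" and nz: "N \<noteq> 0" "D \<noteq> 0" "N' \<noteq> 0" "D' \<noteq> 0"
    and nn: "nonneg N" "nonneg D" "nonneg N'" "nonneg D'"
    and dg: "degree D \<le> degree N" and rD': "D' = rfl (degree N) N" and rN': "N' = rfl (degree N) D"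
    using tup_inv[OF t] unfolding tinv_def by blast+
  have y: "y = 1 / x" using assms(1,2) by (simp add: x_def y_def)
  have qx: "qN x = N \<and> qD x = D" using qND_eq[OF gx nz(2) cp(1)] lead_pos nn nz by blast
  have qy: "qN y = N' \<and> qD y = D'" using qND_eq[of y N' D'] gx' y nz cp(2) lead_pos nn by blast
  have "A^2 + q * B^2 = C * (q * N'^2 + D'^2)"
    unfolding A_def B_def C_def using qx qy ident[of q N N' D D'] by simp
  also have "q * N'^2 + D'^2 = reflect_poly C"
    unfolding C_def q_def using reflC[OF nz(1) dg rD' rN'] qx by simp
  finally show ?thesis .
qed

end
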